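(* Let $U$ be a $d\times d$ unitary matrix, $U_{ij}=\langle a_i|b_j\rangle$ for two orthonormal bases $\{|a_i\rangle\}$, $\{|b_j\rangle\}$ of $\mathbb{C}^d$, and let $p_i=\langle a_i|\rho|a_i\rangle$, $q_j=\langle b_j|\rho|b_j\rangle$ for a state $\rho$ on $\mathbb{C}^d$. For $k=1,\dots,d$ let $s_k=\max\{\|M\|: M \text{ a submatrix of } U \text{ with } \#\mathrm{cols}(M)+\#\mathrm{rows}(M)=k+1\}$, where $\|M\|$ is the largest singular value. Then $$(p_1,\dots,p_d,q_1,\dots,q_d)\prec(1,s_1,s_2-s_1,\dots,s_d-s_{d-1}).$$
   Context: For nonnegative vectors $x,y$ (padded with zeros to a common length if needed), $x\prec y$ means $\sum_{k=1}^n x^{\downarrow}_k\le\sum_{k=1}^n y^{\downarrow}_k$ for all $n$, with equality of total sums, where $x^{\downarrow}$ is $x$ sorted in decreasing order. A submatrix is obtained by selecting a nonempty set of rows and a nonempty set of columns. *)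

theory Defs
  imports Complex_Main
begin

text \<open>Vectors of C^d are functions nat => complex (only indices < d matter);
 d x d matrices are functions nat => nat => complex.\<close>

definition cinner :: "nat \<Rightarrow> (nat \<Rightarrow> complex) \<Rightarrow> (nat \<Rightarrow> complex) \<Rightarrow> complex" where
  "cinner d x y = (\<Sum>i<d. cnj (x i) * y i)"

definition mat_vec :: "nat \<Rightarrow> (nat \<Rightarrow> nat \<Rightarrow> complex) \<Rightarrow> (nat \<Rightarrow> complex) \<Rightarrow> (nat \<Rightarrow> complex)" where
  "mat_vec d A x = (\<lambda>i. \<Sum>j<d. A i j * x j)"

definition orthonormal_basis :: "nat \<Rightarrow> (nat \<Rightarrow> nat \<Rightarrow> complex) \<Rightarrow> bool" where
  "orthonormal_basis d a \<longleftrightarrow>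
     (\<forall>i<d. \<forall>j<d. cinner d (a i) (a j) = (if i = j then 1 else 0))"

definition unitary_mat :: "nat \<Rightarrow> (nat \<Rightarrow> nat \<Rightarrow> complex) \<Rightarrow> bool" where
  "unitary_mat d U \<longleftrightarrow>
     (\<forall>i<d. \<forall>j<d. (\<Sum>k<d. cnj (U k i) * U k j) = (if i = j then 1 else 0)) \<and>
     (\<forall>i<d. \<forall>j<d. (\<Sum>k<d. U i k * cnj (U j k)) = (if i = j then 1 else 0))"

definition density_matrix :: "nat \<Rightarrow> (nat \<Rightarrow> nat \<Rightarrow> complex) \<Rightarrow> bool" where
  "density_matrix d \<rho> \<longleftrightarrow>
     (\<forall>x. cinner d x (mat_vec d \<rho> x) \<in> \<real> \<and> Re (cinner d x (mat_vec d \<rho> x)) \<ge> 0) \<and>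
     (\<Sum>i<d. \<rho> i i) = 1"

text \<open>Largest singular value (= spectral/operator norm) of the submatrix of U with
  row index set I and column index set J.\<close>
definition submat_norm :: "(nat \<Rightarrow> nat \<Rightarrow> complex) \<Rightarrow> nat set \<Rightarrow> nat set \<Rightarrow> real" where
  "submat_norm U I J = Sup {sqrt (\<Sum>i\<in>I. (cmod (\<Sum>j\<in>J. U i j * x j))\<^sup>2) | x.
                              (\<Sum>j\<in>J. (cmod (x j))\<^sup>2) = 1}"

definition s_val :: "nat \<Rightarrow> (nat \<Rightarrow> nat \<Rightarrow> complex) \<Rightarrow> nat \<Rightarrow> real" where
  "s_val d U k = Max {submat_norm U I J | I J.
      I \<subseteq> {..<d} \<and> J \<subseteq> {..<d} \<and> I \<noteq> {} \<and> J \<noteq> {} \<and> card I + card J = k + 1}"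

definition top_sum :: "real list \<Rightarrow> nat \<Rightarrow> real" where
  "top_sum xs n = sum_list (take n (rev (sort xs)))"

definition pad :: "nat \<Rightarrow> real list \<Rightarrow> real list" where
  "pad m xs = xs @ replicate (m - length xs) 0"

definition majorized :: "real list \<Rightarrow> real list \<Rightarrow> bool" (infix "\<prec>" 50) where
  "xs \<prec> ys \<longleftrightarrow>
     (let m = max (length xs) (length ys) in
       (\<forall>n. top_sum (pad m xs) n \<le> top_sum (pad m ys) n) \<and> sum_list xs = sum_list ys)"

end

theory Submission
  imports Defs "Jordan_Normal_Form.Determinant" "HOL-Analysis.L2_Norm" "HOL-Combinatorics.Permutations"
begin


lemma onb_complete:
  assumes "orthonormal_basis d a" "k < d" "l < d"
  shows "(\<Sum>i<d. cnj (a i k) * a i l) = (if k = l then 1 else 0)"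
proof -
  define A where "A = mat d d (\<lambda>(i,k). a i k)"
  define B where "B = mat d d (\<lambda>(k,i). cnj (a i k))"
  have AB: "A * B = 1\<^sub>m d"
  proof (rule eq_matI)
    fix i j assume ij: "i < dim_row (1\<^sub>m d)" "j < dim_col (1\<^sub>m d)"
    hence "(A * B) $$ (i,j) = (\<Sum>k<d. a i k * cnj (a j k))"
      by (simp add: A_def B_def scalar_prod_def row_def col_def atLeast0LessThan)
    also have "\<dots> = cnj (cinner d (a i) (a j))"
      by (simp add: cinner_def mult.commute)
    also have "\<dots> = (if i = j then 1 else 0)" using assms(1) ij
      by (simp add: orthonormal_basis_def)
    finally show "(A * B) $$ (i,j) = 1\<^sub>m d $$ (i,j)" using ij by simp
  qed (auto simp: A_def B_def)
  have "B * A = 1\<^sub>m d"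
    by (rule mat_mult_left_right_inverse[OF _ _ AB]) (auto simp: A_def B_def)
  hence "(B * A) $$ (k,l) = 1\<^sub>m d $$ (k,l)" by simp
  thus ?thesis using assms(2,3)
    by (simp add: A_def B_def scalar_prod_def row_def col_def atLeast0LessThan)
qed



definition qf :: "nat \<Rightarrow> (nat \<Rightarrow> nat \<Rightarrow> complex) \<Rightarrow> (nat \<Rightarrow> complex) \<Rightarrow> complex" where
  "qf n G x = cinner n x (mat_vec n G x)"

definition psd :: "nat \<Rightarrow> (nat \<Rightarrow> nat \<Rightarrow> complex) \<Rightarrow> bool" where
  "psd n G \<longleftrightarrow> (\<forall>x. qf n G x \<in> \<real> \<and> Re (qf n G x) \<ge> 0)"

lemma qf_expand: "qf n G x = (\<Sum>k<n. \<Sum>l<n. cnj (x k) * G k l * x l)"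
  by (simp add: qf_def cinner_def mat_vec_def sum_distrib_left mult.assoc)

lemma qf_cong: "(\<And>k. k < n \<Longrightarrow> x k = y k) \<Longrightarrow> qf n G x = qf n G y"
  unfolding qf_expand by (intro sum.cong) auto

lemma qf_Suc: "qf (Suc n) G y = qf n G y + cnj (y n) * (\<Sum>l<n. G n l * y l)
   + (\<Sum>k<n. cnj (y k) * G k n) * y n + cnj (y n) * G n n * y n"
  unfolding qf_expand
  by (simp add: sum.distrib sum_distrib_left sum_distrib_right mult.assoc algebra_simps)

lemma dd:
  assumes "a < (n::nat)" "b < n"
  shows "(\<Sum>k<n. \<Sum>l<n. (if k = a then \<alpha> else 0) * G k l * (if l = b then \<beta> else 0))
     = (\<alpha>::complex) * G a b * \<beta>"
  using assms by (simp add: if_distrib[of "\<lambda>x. _ * x"] if_distrib[of "\<lambda>x. x * _"] sum.delta cong: if_cong)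

lemma qf_two:
  assumes "k < n" "l < n" "k \<noteq> l"
  shows "qf n G (\<lambda>j. (if j = k then 1 else 0) + (if j = l then z else 0))
     = G k k + G k l * z + cnj z * G l k + cnj z * G l l * z"
  using assms unfolding qf_expand
  by (simp add: distrib_left distrib_right sum.distrib if_distrib[of cnj] dd cong: if_cong)

lemma qf_one:
  assumes "k < n"
  shows "qf n G (\<lambda>j. if j = k then 1 else 0) = G k k"
  using assms unfolding qf_expand using dd[OF assms assms, of 1 G 1] by (simp add: if_distrib[of cnj] cong: if_cong)

lemma psd_herm:
  assumes "psd n G" "k < n" "l < n"
  shows "G l k = cnj (G k l)"
proof (cases "k = l")
  case True
  have "qf n G (\<lambda>j. if j = k then 1 else 0) \<in> \<real>" using assms(1) by (simp add: psd_def)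
  hence "G k k \<in> \<real>" using qf_one[OF assms(2)] by simp
  thus ?thesis using True by (simp add: Reals_cnj_iff)
next
  case False
  have r: "qf n G x \<in> \<real>" for x using assms(1) by (simp add: psd_def)
  have "G k k \<in> \<real>" using r[of "\<lambda>j. if j = k then 1 else 0"] qf_one[OF assms(2)] by simp
  moreover have "G l l \<in> \<real>" using r[of "\<lambda>j. if j = l then 1 else 0"] qf_one[OF assms(3)] by simp
  moreover have "G k k + G k l * 1 + cnj 1 * G l k + cnj 1 * G l l * 1 \<in> \<real>"
    using r[of "\<lambda>j. (if j = k then 1 else 0) + (if j = l then 1 else 0)"]
    unfolding qf_two[OF assms(2,3) False] .
  moreover have "G k k + G k l * \<i> + cnj \<i> * G l k + cnj \<i> * G l l * \<i> \<in> \<real>"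
    using r[of "\<lambda>j. (if j = k then 1 else 0) + (if j = l then \<i> else 0)"]
    unfolding qf_two[OF assms(2,3) False] .
  ultimately have "Im (G k l) + Im (G l k) = 0" "Re (G k l) - Re (G l k) = 0"
    by (simp_all add: complex_is_Real_iff)
  thus ?thesis by (simp add: complex_eq_iff)
qed

lemma psd_zero_diag:
  assumes "psd n G" "k < n" "m < n" "G m m = 0"
  shows "G k m = 0"
proof (rule ccontr)
  assume w: "G k m \<noteq> 0"
  hence km: "k \<noteq> m" using assms(4) by auto
  define c where "c = \<bar>Re (G k k)\<bar> + 1"
  define t where "t = c / (cmod (G k m))\<^sup>2"
  define z where "z = - of_real t * cnj (G k m)"
  have cw: "(cmod (G k m))\<^sup>2 > 0" using w by simp
  have "G k m * z = - of_real (t * (cmod (G k m))\<^sup>2)"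
  proof -
    have "G k m * cnj (G k m) = of_real ((cmod (G k m))\<^sup>2)" by (rule complex_norm_square[symmetric])
    thus ?thesis by (simp add: z_def)
  qed
  also have "t * (cmod (G k m))\<^sup>2 = c" using cw by (simp add: t_def)
  finally have e1: "G k m * z = - of_real c" .
  have e2: "cnj z * G m k = cnj (G k m * z)" using psd_herm[OF assms(1) assms(2) assms(3)] by simp
  have "Re (qf n G (\<lambda>j. (if j = k then 1 else 0) + (if j = m then z else 0))) \<ge> 0"
    using assms(1) by (simp add: psd_def)
  hence "Re (G k k + G k m * z + cnj z * G m k + cnj z * G m m * z) \<ge> 0"
    unfolding qf_two[OF assms(2,3) km] .
  hence "Re (G k k) - 2 * c \<ge> 0" using e1 e2 assms(4) by simp
  thus False unfolding c_def by (smt (verit) abs_ge_self)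
qed

lemma qf_rank1:
  "qf n (\<lambda>k l. G k l - v k * cnj (v l)) x = qf n G x - (\<Sum>k<n. cnj (x k) * v k) * (\<Sum>l<n. cnj (v l) * x l)"
  unfolding qf_expand
  by (simp add: algebra_simps sum_subtractf sum_distrib_left sum_distrib_right) (rule sum.swap)

lemma aux_field: "(c::complex) \<noteq> 0 \<Longrightarrow> q - a*b/c = q + (-a/c)*b + a*(-b/c) + (-a/c)*c*(-b/c)"
  by (simp add: field_simps power2_eq_square)

lemma chol:
  "psd n G \<Longrightarrow> \<exists>c. \<forall>k<n. \<forall>l<n. G k l = (\<Sum>r<n. c r k * cnj (c r l))"
proof (induction n arbitrary: G)
  case 0
  then show ?case by simp
next
  case (Suc n G)
  have herm: "G l k = cnj (G k l)" if "k < Suc n" "l < Suc n" for k l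
    using psd_herm[OF Suc.prems that] .
  show ?case
  proof (cases "G n n = 0")
    case True
    have Gz: "G k n = 0" if "k < Suc n" for k
      using psd_zero_diag[OF Suc.prems that _ True] by simp
    have Gz': "G n k = 0" if "k < Suc n" for k
      using herm[OF that, of n] Gz[OF that] by simp
    have "psd n G" unfolding psd_def
    proof
      fix x :: "nat \<Rightarrow> complex"
      define y where "y = (\<lambda>j. if j < n then x j else 0)"
      have "qf (Suc n) G y = qf n G y" unfolding qf_Suc by (simp add: y_def)
      also have "\<dots> = qf n G x" by (rule qf_cong) (simp add: y_def)
      finally show "qf n G x \<in> \<real> \<and> 0 \<le> Re (qf n G x)"
        using Suc.prems unfolding psd_def by metis
    qed
    from Suc.IH[OF this] obtain c' where c': "\<forall>k<n. \<forall>l<n. G k l = (\<Sum>r<n. c' r k * cnj (c' r l))"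
      by blast
    define c where "c = (\<lambda>r k. if r < n \<and> k < n then c' r k else 0)"
    show ?thesis
    proof (intro exI allI impI)
      fix k l assume k: "k < Suc n" and l: "l < Suc n"
      show "G k l = (\<Sum>r<Suc n. c r k * cnj (c r l))"
      proof (cases "k < n \<and> l < n")
        case True
        thus ?thesis using c' by (simp add: c_def)
      next
        case False
        hence "k = n \<or> l = n" using k l by auto
        hence "G k l = 0" using Gz Gz' k l by auto
        moreover have "(\<Sum>r<Suc n. c r k * cnj (c r l)) = 0"
          using False by (intro sum.neutral) (auto simp: c_def)
        ultimately show ?thesis by simp
      qed
    qed
  next
    case False
    define \<gamma> where "\<gamma> = G n n"
    have "\<gamma> \<in> \<real>" using herm[of n n] unfolding \<gamma>_def by (simp add: Reals_cnj_iff)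
    moreover have "Re \<gamma> \<ge> 0"
    proof -
      have "Re (qf (Suc n) G (\<lambda>j. if j = n then 1 else 0)) \<ge> 0" using Suc.prems by (simp add: psd_def)
      thus ?thesis using qf_one[of n "Suc n" G] unfolding \<gamma>_def by simp
    qed
    ultimately obtain g where g: "\<gamma> = of_real g" "g > 0" using False unfolding \<gamma>_def
      by (metis Reals_cases less_eq_real_def Re_complex_of_real of_real_0)
    define h where "h = sqrt g"
    have hh: "of_real h * of_real h = \<gamma>" using g by (simp add: h_def flip: of_real_mult)
    have h0: "(of_real h :: complex) \<noteq> 0" using g by (simp add: h_def)
    define v where "v = (\<lambda>k. G k n / of_real h)"
    have vv: "v k * cnj (v l) = G k n * G n l / \<gamma>" if "k < Suc n" "l < Suc n" for k l
    proof -
      have "v k * cnj (v l) = G k n * cnj (G l n) / (of_real h * of_real h)"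
        by (simp add: v_def)
      also have "\<dots> = G k n * G n l / \<gamma>" using herm[of l n] that hh by simp
      finally show ?thesis .
    qed
    have hk: "cnj (G n k) = G k n" if "k < n" for k using herm[of n k] that by simp
    have hk2: "cnj (G k n) = G n k" if "k < n" for k using herm[of k n] that by simp
    define G' where "G' = (\<lambda>k l. G k l - v k * cnj (v l))"
    have "psd n G'" unfolding psd_def
    proof
      fix x :: "nat \<Rightarrow> complex"
      define \<beta> where "\<beta> = (\<Sum>l<n. G n l * x l)"
      define y where "y = (\<lambda>j. if j < n then x j else - \<beta> / \<gamma>)"
      have s1: "(\<Sum>k<n. cnj (x k) * v k) = cnj \<beta> / of_real h"
        unfolding \<beta>_def v_def cnj_sum sum_divide_distrib
        by (rule sum.cong) (simp_all add: hk mult.commute)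
      have s2: "(\<Sum>l<n. cnj (v l) * x l) = \<beta> / of_real h"
        unfolding \<beta>_def v_def cnj_sum sum_divide_distrib
        by (rule sum.cong) (simp_all add: hk2 mult.commute)
      have s3: "(\<Sum>k<n. cnj (x k) * G k n) = cnj \<beta>"
        unfolding \<beta>_def cnj_sum by (rule sum.cong) (simp_all add: hk mult.commute)
      have cg: "cnj \<gamma> = \<gamma>" using g by simp
      have "qf n G' x = qf n G x - cnj \<beta> * \<beta> / \<gamma>"
        unfolding G'_def qf_rank1 s1 s2 using hh by simp
      also have "\<dots> = qf n G x + cnj (- \<beta> / \<gamma>) * \<beta> + cnj \<beta> * (- \<beta> / \<gamma>)
          + cnj (- \<beta> / \<gamma>) * \<gamma> * (- \<beta> / \<gamma>)"
        using cg False aux_field[of \<gamma> "qf n G x" "cnj \<beta>" \<beta>] unfolding \<gamma>_def by simp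
      also have "\<dots> = qf (Suc n) G y"
      proof -
        have qy: "qf n G y = qf n G x" by (rule qf_cong) (simp add: y_def)
        have "(\<Sum>l<n. G n l * y l) = \<beta>" unfolding \<beta>_def by (rule sum.cong) (simp_all add: y_def)
        moreover have "(\<Sum>k<n. cnj (y k) * G k n) = cnj \<beta>" unfolding s3[symmetric] by (rule sum.cong) (simp_all add: y_def)
        moreover have "y n = - \<beta> / \<gamma>" by (simp add: y_def)
        ultimately show ?thesis unfolding qf_Suc qy \<gamma>_def[symmetric] by simp
      qed
      finally show "qf n G' x \<in> \<real> \<and> 0 \<le> Re (qf n G' x)"
        using Suc.prems unfolding psd_def by metis
    qed
    from Suc.IH[OF this] obtain c' where c': "\<forall>k<n. \<forall>l<n. G' k l = (\<Sum>r<n. c' r k * cnj (c' r l))"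
      by blast
    define c where "c = (\<lambda>r k. if r < n then (if k < n then c' r k else 0) else v k)"
    show ?thesis
    proof (intro exI allI impI)
      fix k l assume k: "k < Suc n" and l: "l < Suc n"
      have sp: "(\<Sum>r<Suc n. c r k * cnj (c r l)) = (\<Sum>r<n. c r k * cnj (c r l)) + v k * cnj (v l)"
        by (simp add: c_def)
      show "G k l = (\<Sum>r<Suc n. c r k * cnj (c r l))"
      proof (cases "k < n \<and> l < n")
        case True
        hence "(\<Sum>r<n. c r k * cnj (c r l)) = G' k l" using c' by (simp add: c_def)
        thus ?thesis unfolding sp G'_def by simp
      next
        case F: False
        hence "k = n \<or> l = n" using k l by auto
        hence "G k l = v k * cnj (v l)"
          using vv[OF k l] False unfolding \<gamma>_def by auto
        moreover have "(\<Sum>r<n. c r k * cnj (c r l)) = 0"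
          using F by (intro sum.neutral) (auto simp: c_def)
        ultimately show ?thesis unfolding sp by simp
      qed
    qed
  qed
qed



definition nrm :: "'a set \<Rightarrow> ('a \<Rightarrow> complex) \<Rightarrow> real" where
  "nrm S x = (\<Sum>k\<in>S. (cmod (x k))\<^sup>2)"

lemma nrm_ge0: "nrm S x \<ge> 0" by (simp add: nrm_def sum_nonneg)

lemma CS_set:
  assumes "finite S"
  shows "(cmod (\<Sum>k\<in>S. cnj (x k) * y k))\<^sup>2 \<le> nrm S x * nrm S y"
proof -
  have "cmod (\<Sum>k\<in>S. cnj (x k) * y k) \<le> (\<Sum>k\<in>S. \<bar>cmod (x k)\<bar> * \<bar>cmod (y k)\<bar>)"
    by (rule order_trans[OF norm_sum]) (simp add: norm_mult)
  also have "\<dots> \<le> L2_set (\<lambda>k. cmod (x k)) S * L2_set (\<lambda>k. cmod (y k)) S"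
    by (rule L2_set_mult_ineq)
  finally have "cmod (\<Sum>k\<in>S. cnj (x k) * y k) \<le> sqrt (nrm S x) * sqrt (nrm S y)"
    by (simp add: L2_set_def nrm_def)
  hence "(cmod (\<Sum>k\<in>S. cnj (x k) * y k))\<^sup>2 \<le> (sqrt (nrm S x) * sqrt (nrm S y))\<^sup>2"
    by (intro power_mono) auto
  thus ?thesis by (simp add: power_mult_distrib nrm_ge0)
qed

lemma CS_cinner: "(cmod (cinner d x y))\<^sup>2 \<le> nrm {..<d} x * nrm {..<d} y"
  unfolding cinner_def by (rule CS_set) simp

lemma cinner_self: "cinner d x x = of_real (nrm {..<d} x)"
  unfolding cinner_def nrm_def of_real_sum
  by (rule sum.cong[OF refl], subst complex_norm_square, simp add: mult.commute)

lemma cinner_cnj: "cinner d y x = cnj (cinner d x y)"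
  by (simp add: cinner_def cnj_sum mult.commute)

lemma cinner_add_right: "cinner d x (\<lambda>k. y k + z k) = cinner d x y + cinner d x z"
  by (simp add: cinner_def distrib_left sum.distrib)

lemma cinner_add_left: "cinner d (\<lambda>k. y k + z k) x = cinner d y x + cinner d z x"
  by (simp add: cinner_def distrib_right sum.distrib)

lemma cinner_sum_right: "cinner d x (\<lambda>k. \<Sum>i\<in>I. f i * a i k) = (\<Sum>i\<in>I. f i * cinner d x (a i))"
  unfolding cinner_def
  by (simp add: sum_distrib_left sum_distrib_right mult_ac) (rule sum.swap)

lemma cinner_sums:
  "cinner d (\<lambda>k. \<Sum>i\<in>I. f i * a i k) (\<lambda>k. \<Sum>j\<in>J. g j * b j k)
    = (\<Sum>i\<in>I. \<Sum>j\<in>J. cnj (f i) * g j * cinner d (a i) (b j))"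
proof -
  have "cinner d (\<lambda>k. \<Sum>i\<in>I. f i * a i k) (\<lambda>k. \<Sum>j\<in>J. g j * b j k)
      = cnj (cinner d (\<lambda>k. \<Sum>j\<in>J. g j * b j k) (\<lambda>k. \<Sum>i\<in>I. f i * a i k))"
    by (rule cinner_cnj)
  also have "\<dots> = cnj (\<Sum>i\<in>I. f i * cinner d (\<lambda>k. \<Sum>j\<in>J. g j * b j k) (a i))"
    by (simp only: cinner_sum_right)
  also have "\<dots> = (\<Sum>i\<in>I. cnj (f i) * cinner d (a i) (\<lambda>k. \<Sum>j\<in>J. g j * b j k))"
    by (simp add: cnj_sum cinner_cnj[of d "a _"])
  also have "\<dots> = (\<Sum>i\<in>I. \<Sum>j\<in>J. cnj (f i) * g j * cinner d (a i) (b j))"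
    by (simp add: cinner_sum_right sum_distrib_left mult.assoc)
  finally show ?thesis .
qed

lemma onb_sum_norm:
  assumes "orthonormal_basis d a" "I \<subseteq> {..<d}"
  shows "(\<Sum>i\<in>I. \<Sum>j\<in>I. cnj (f i) * f j * cinner d (a i) (a j)) = of_real (nrm I f)"
proof -
  have "(\<Sum>i\<in>I. \<Sum>j\<in>I. cnj (f i) * f j * cinner d (a i) (a j))
      = (\<Sum>i\<in>I. \<Sum>j\<in>I. if j = i then cnj (f i) * f j else 0)"
    using assms by (intro sum.cong refl) (auto simp: orthonormal_basis_def subset_eq)
  also have "\<dots> = (\<Sum>i\<in>I. cnj (f i) * f i)"
  proof -
    have "finite I" using assms(2) finite_subset by blast
    thus ?thesis by (simp add: sum.delta)
  qed
  also have "\<dots> = of_real (nrm I f)"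
    unfolding nrm_def of_real_sum
    by (rule sum.cong[OF refl], subst complex_norm_square, simp add: mult.commute)
  finally show ?thesis .
qed

lemma key_pure:
  assumes oa: "orthonormal_basis d a" and ob: "orthonormal_basis d b"
    and UU: "\<forall>i<d. \<forall>j<d. U i j = cinner d (a i) (b j)"
    and I: "I \<subseteq> {..<d}" and J: "J \<subseteq> {..<d}" and s0: "s \<ge> 0"
    and bnd: "\<And>y. (\<Sum>i\<in>I. (cmod (\<Sum>j\<in>J. U i j * y j))\<^sup>2) \<le> s\<^sup>2 * nrm J y"
  shows "nrm I (\<lambda>i. cinner d (a i) x) + nrm J (\<lambda>j. cinner d (b j) x) \<le> (1 + s) * nrm {..<d} x"
proof -
  define \<alpha> where "\<alpha> = (\<lambda>i. cinner d (a i) x)"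
  define \<beta> where "\<beta> = (\<lambda>j. cinner d (b j) x)"
  define A where "A = nrm I \<alpha>"
  define B where "B = nrm J \<beta>"
  define t where "t = A + B"
  have A0: "A \<ge> 0" and B0: "B \<ge> 0" by (simp_all add: A_def B_def nrm_ge0)
  have fI: "finite I" and fJ: "finite J" using I J finite_subset by blast+
  define u where "u = (\<lambda>k. \<Sum>i\<in>I. \<alpha> i * a i k)"
  define v where "v = (\<lambda>k. \<Sum>j\<in>J. \<beta> j * b j k)"
  define w where "w = (\<lambda>k. u k + v k)"
  have xu: "cinner d x u = of_real A"
  proof -
    have "cinner d x u = (\<Sum>i\<in>I. \<alpha> i * cinner d x (a i))" unfolding u_def by (rule cinner_sum_right)
    also have "\<dots> = (\<Sum>i\<in>I. cnj (\<alpha> i) * \<alpha> i)"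
      by (simp add: \<alpha>_def cinner_cnj[of d x] mult.commute)
    also have "\<dots> = of_real A"
      unfolding A_def nrm_def of_real_sum
      by (rule sum.cong[OF refl], subst complex_norm_square, simp add: mult.commute)
    finally show ?thesis .
  qed
  have xv: "cinner d x v = of_real B"
  proof -
    have "cinner d x v = (\<Sum>i\<in>J. \<beta> i * cinner d x (b i))" unfolding v_def by (rule cinner_sum_right)
    also have "\<dots> = (\<Sum>i\<in>J. cnj (\<beta> i) * \<beta> i)"
      by (simp add: \<beta>_def cinner_cnj[of d x] mult.commute)
    also have "\<dots> = of_real B"
      unfolding B_def nrm_def of_real_sum
      by (rule sum.cong[OF refl], subst complex_norm_square, simp add: mult.commute)
    finally show ?thesis .
  qed
  have xw: "cinner d x w = of_real t"
    unfolding w_def cinner_add_right xu xv t_def by simp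
  have uu: "cinner d u u = of_real A"
    unfolding u_def cinner_sums A_def using onb_sum_norm[OF oa I] .
  have vv: "cinner d v v = of_real B"
    unfolding v_def cinner_sums B_def using onb_sum_norm[OF ob J] .
  define z where "z = cinner d u v"
  have vu: "cinner d v u = cnj z" unfolding z_def by (rule cinner_cnj)
  have z_eq: "z = (\<Sum>i\<in>I. cnj (\<alpha> i) * (\<Sum>j\<in>J. U i j * \<beta> j))"
  proof -
    have "z = (\<Sum>i\<in>I. \<Sum>j\<in>J. cnj (\<alpha> i) * \<beta> j * cinner d (a i) (b j))"
      unfolding z_def u_def v_def by (rule cinner_sums)
    also have "\<dots> = (\<Sum>i\<in>I. \<Sum>j\<in>J. cnj (\<alpha> i) * (U i j * \<beta> j))"
      using I J UU by (intro sum.cong refl) (auto simp: subset_eq mult_ac)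
    finally show ?thesis by (simp add: sum_distrib_left)
  qed
  have "(cmod z)\<^sup>2 \<le> nrm I \<alpha> * nrm I (\<lambda>i. \<Sum>j\<in>J. U i j * \<beta> j)"
    unfolding z_eq by (rule CS_set[OF fI])
  also have "\<dots> \<le> A * (s\<^sup>2 * B)"
    unfolding A_def B_def using bnd[of \<beta>] by (intro mult_left_mono) (auto simp: nrm_def nrm_ge0 sum_nonneg)
  finally have z2: "(cmod z)\<^sup>2 \<le> A * (s\<^sup>2 * B)" .
  have "(2 * cmod z)\<^sup>2 \<le> (s * t)\<^sup>2"
  proof -
    have "(2 * cmod z)\<^sup>2 = 4 * (cmod z)\<^sup>2" by (simp add: power2_eq_square)
    also have "\<dots> \<le> s\<^sup>2 * (4 * A * B)" using z2 by (simp add: mult_ac)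
    also have "\<dots> \<le> s\<^sup>2 * t\<^sup>2"
    proof -
      have "4 * A * B \<le> t\<^sup>2" unfolding t_def using zero_le_power2[of "A - B"]
        by (simp add: power2_eq_square algebra_simps)
      thus ?thesis by (intro mult_left_mono) simp_all
    qed
    finally show ?thesis by (simp add: power_mult_distrib)
  qed
  moreover have "0 \<le> s * t" using s0 A0 B0 by (simp add: t_def)
  ultimately have z_le: "2 * cmod z \<le> s * t" by (rule power2_le_imp_le)
  have ww: "cinner d w w = of_real (A + B) + z + cnj z"
    unfolding w_def cinner_add_right cinner_add_left uu vv vu z_def[symmetric] by simp
  have nw: "nrm {..<d} w = A + B + 2 * Re z"
  proof -
    have "of_real (nrm {..<d} w) = cinner d w w" by (rule cinner_self[symmetric])
    also have "\<dots> = of_real (A + B + 2 * Re z)" unfolding ww by (simp add: complex_add_cnj)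
    finally show ?thesis by (simp only: of_real_eq_iff)
  qed
  have "Re z \<le> cmod z" by (rule complex_Re_le_cmod)
  hence nw_le: "nrm {..<d} w \<le> t * (1 + s)" using nw z_le by (simp add: t_def algebra_simps)
  have "t\<^sup>2 = (cmod (cinner d x w))\<^sup>2" using A0 B0 unfolding xw norm_of_real t_def by simp
  also have "\<dots> \<le> nrm {..<d} x * nrm {..<d} w" by (rule CS_cinner)
  also have "\<dots> \<le> nrm {..<d} x * (t * (1 + s))" by (intro mult_left_mono nw_le nrm_ge0)
  finally have tt: "t * t \<le> t * ((1 + s) * nrm {..<d} x)" by (simp add: power2_eq_square mult_ac)
  have "t \<le> (1 + s) * nrm {..<d} x"
  proof (cases "t > 0")
    case True thus ?thesis using tt by simp
  next
    case False thus ?thesis using s0 nrm_ge0[of "{..<d}" x] by (simp add: not_less) (smt (verit) mult_nonneg_nonneg)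
  qed
  thus ?thesis unfolding t_def A_def B_def \<alpha>_def \<beta>_def .
qed



lemma cinner_cong:
  "(\<And>k. k < d \<Longrightarrow> x k = x' k) \<Longrightarrow> (\<And>k. k < d \<Longrightarrow> y k = y' k) \<Longrightarrow> cinner d x y = cinner d x' y'"
  unfolding cinner_def by (intro sum.cong) auto

lemma cnorm_sq: "cnj z * z = of_real ((cmod z)\<^sup>2)"
  by (subst complex_norm_square) (simp add: mult.commute)

lemma mixed_form:
  assumes "\<forall>k<d. \<forall>l<d. \<rho> k l = (\<Sum>r<d. c r k * cnj (c r l))"
  shows "cinner d y (mat_vec d \<rho> y) = of_real (\<Sum>r<d. (cmod (cinner d y (c r)))\<^sup>2)"
proof -
  have mv: "mat_vec d \<rho> y k = (\<Sum>r<d. cinner d (c r) y * c r k)" if "k < d" for k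
  proof -
    have "mat_vec d \<rho> y k = (\<Sum>l<d. \<Sum>r<d. c r k * cnj (c r l) * y l)"
      unfolding mat_vec_def using assms that by (simp add: sum_distrib_right)
    also have "\<dots> = (\<Sum>r<d. \<Sum>l<d. c r k * cnj (c r l) * y l)" by (rule sum.swap)
    also have "\<dots> = (\<Sum>r<d. cinner d (c r) y * c r k)"
      by (simp add: cinner_def sum_distrib_left sum_distrib_right mult_ac)
    finally show ?thesis .
  qed
  have "cinner d y (mat_vec d \<rho> y) = cinner d y (\<lambda>k. \<Sum>r<d. cinner d (c r) y * c r k)"
    by (rule cinner_cong) (simp_all add: mv)
  also have "\<dots> = (\<Sum>r<d. cinner d (c r) y * cinner d y (c r))" by (rule cinner_sum_right)
  also have "\<dots> = (\<Sum>r<d. of_real ((cmod (cinner d y (c r)))\<^sup>2))"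
    by (rule sum.cong[OF refl]) (simp add: cinner_cnj[of d "c _"] cnorm_sq)
  finally show ?thesis by simp
qed

lemma trace_chol:
  assumes "\<forall>k<d. \<forall>l<d. \<rho> k l = (\<Sum>r<d. c r k * cnj (c r l))"
  shows "(\<Sum>k<d. \<rho> k k) = of_real (\<Sum>r<d. nrm {..<d} (c r))"
proof -
  have "(\<Sum>k<d. \<rho> k k) = (\<Sum>k<d. \<Sum>r<d. c r k * cnj (c r k))" using assms by simp
  also have "\<dots> = (\<Sum>r<d. \<Sum>k<d. c r k * cnj (c r k))" by (rule sum.swap)
  also have "\<dots> = of_real (\<Sum>r<d. nrm {..<d} (c r))"
    unfolding nrm_def of_real_sum by (intro sum.cong refl) (metis cnorm_sq mult.commute)
  finally show ?thesis .
qed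

lemma col_onb:
  assumes "unitary_mat d U"
  shows "orthonormal_basis d (\<lambda>j i. U i j)"
  using assms unfolding unitary_mat_def orthonormal_basis_def cinner_def by simp

lemma submat_iso:
  assumes U: "unitary_mat d U" and I: "I \<subseteq> {..<d}" and J: "J \<subseteq> {..<d}"
  shows "(\<Sum>i\<in>I. (cmod (\<Sum>j\<in>J. U i j * x j))\<^sup>2) \<le> nrm J x"
proof -
  have "(\<Sum>i\<in>I. (cmod (\<Sum>j\<in>J. U i j * x j))\<^sup>2) \<le> (\<Sum>i<d. (cmod (\<Sum>j\<in>J. U i j * x j))\<^sup>2)"
    by (rule sum_mono2) (use I in auto)
  also have "\<dots> = nrm {..<d} (\<lambda>i. \<Sum>j\<in>J. x j * U i j)" by (simp add: nrm_def mult.commute)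
  also have "\<dots> = nrm J x"
  proof -
    have "of_real (nrm {..<d} (\<lambda>i. \<Sum>j\<in>J. x j * U i j)) = cinner d (\<lambda>i. \<Sum>j\<in>J. x j * U i j) (\<lambda>i. \<Sum>j\<in>J. x j * U i j)"
      by (rule cinner_self[symmetric])
    also have "\<dots> = of_real (nrm J x)"
      unfolding cinner_sums using onb_sum_norm[OF col_onb[OF U] J] .
    finally show ?thesis by (simp only: of_real_eq_iff)
  qed
  finally show ?thesis .
qed

definition SNset where
  "SNset U I J = {sqrt (\<Sum>i\<in>I. (cmod (\<Sum>j\<in>J. U i j * x j))\<^sup>2) | x.
                              (\<Sum>j\<in>J. (cmod (x j))\<^sup>2) = 1}"

lemma submat_norm_SN: "submat_norm U I J = Sup (SNset U I J)"
  unfolding submat_norm_def SNset_def ..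

lemma SN_le1:
  assumes U: "unitary_mat d U" and I: "I \<subseteq> {..<d}" and J: "J \<subseteq> {..<d}"
  shows "v \<in> SNset U I J \<Longrightarrow> v \<le> 1"
proof -
  assume "v \<in> SNset U I J"
  then obtain x where x: "(\<Sum>j\<in>J. (cmod (x j))\<^sup>2) = 1" "v = sqrt (\<Sum>i\<in>I. (cmod (\<Sum>j\<in>J. U i j * x j))\<^sup>2)"
    unfolding SNset_def by blast
  have "(\<Sum>i\<in>I. (cmod (\<Sum>j\<in>J. U i j * x j))\<^sup>2) \<le> 1"
    using submat_iso[OF U I J, of x] x(1) by (simp add: nrm_def)
  thus "v \<le> 1" using x(2) by simp
qed

lemma SN_ne:
  assumes J: "J \<subseteq> {..<(d::nat)}" "J \<noteq> {}"
  shows "SNset U I J \<noteq> {}"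
proof -
  obtain j0 where j0: "j0 \<in> J" using J by blast
  have fJ: "finite J" by (rule finite_subset[OF J(1)]) simp
  define x0 where "x0 = (\<lambda>j. if j = j0 then 1 else 0 :: complex)"
  have "(\<Sum>j\<in>J. (cmod (x0 j))\<^sup>2) = 1"
  proof -
    have "\<And>j. (cmod (x0 j))\<^sup>2 = (if j = j0 then 1 else 0)" by (simp add: x0_def)
    thus ?thesis using fJ j0 by simp
  qed
  hence "sqrt (\<Sum>i\<in>I. (cmod (\<Sum>j\<in>J. U i j * x0 j))\<^sup>2) \<in> SNset U I J"
    unfolding SNset_def by blast
  thus ?thesis by blast
qed

lemma submat_upper:
  assumes U: "unitary_mat d U" and I: "I \<subseteq> {..<d}" and J: "J \<subseteq> {..<d}"
    and x: "nrm J x = 1"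
  shows "sqrt (\<Sum>i\<in>I. (cmod (\<Sum>j\<in>J. U i j * x j))\<^sup>2) \<le> submat_norm U I J"
  unfolding submat_norm_SN
proof (rule cSup_upper)
  show "sqrt (\<Sum>i\<in>I. (cmod (\<Sum>j\<in>J. U i j * x j))\<^sup>2) \<in> SNset U I J"
    using x unfolding SNset_def nrm_def by blast
  show "bdd_above (SNset U I J)" using SN_le1[OF U I J] by (intro bdd_aboveI) 
qed

lemma submat_le1:
  assumes U: "unitary_mat d U" and I: "I \<subseteq> {..<d}" and J: "J \<subseteq> {..<d}" "J \<noteq> {}"
  shows "submat_norm U I J \<le> 1"
  unfolding submat_norm_SN by (rule cSup_least[OF SN_ne[OF J]]) (rule SN_le1[OF U I J(1)])

lemma submat_ge0:
  assumes U: "unitary_mat d U" and I: "I \<subseteq> {..<d}" and J: "J \<subseteq> {..<d}" "J \<noteq> {}"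
  shows "submat_norm U I J \<ge> 0"
proof -
  obtain v where v: "v \<in> SNset U I J" using SN_ne[OF J] by blast
  then obtain x where "nrm J x = 1" "v = sqrt (\<Sum>i\<in>I. (cmod (\<Sum>j\<in>J. U i j * x j))\<^sup>2)"
    unfolding SNset_def nrm_def by blast
  moreover have "0 \<le> sqrt (\<Sum>i\<in>I. (cmod (\<Sum>j\<in>J. U i j * x j))\<^sup>2)" by (simp add: sum_nonneg)
  ultimately show ?thesis using submat_upper[OF U I J(1)] by (meson order_trans)
qed

lemma submat_bound:
  assumes U: "unitary_mat d U" and I: "I \<subseteq> {..<d}" and J: "J \<subseteq> {..<d}" "J \<noteq> {}"
  shows "(\<Sum>i\<in>I. (cmod (\<Sum>j\<in>J. U i j * y j))\<^sup>2) \<le> (submat_norm U I J)\<^sup>2 * nrm J y"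
proof (cases "nrm J y = 0")
  case True
  have fJ: "finite J" by (rule finite_subset[OF J(1)]) simp
  have "\<forall>j\<in>J. (cmod (y j))\<^sup>2 = 0"
    using True fJ unfolding nrm_def by (subst sum_nonneg_eq_0_iff[symmetric]) auto
  hence "\<forall>j\<in>J. y j = 0" by simp
  thus ?thesis using True by simp
next
  case False
  define n where "n = nrm J y"
  have n0: "n > 0" using False nrm_ge0[of J y] unfolding n_def by linarith
  define x where "x = (\<lambda>j. y j / of_real (sqrt n))"
  have "nrm J x = nrm J y / n"
    unfolding x_def nrm_def by (simp add: norm_divide power_divide sum_divide_distrib n0 less_imp_le)
  hence x1: "nrm J x = 1" using n0 by (simp add: n_def)
  have e: "(\<Sum>i\<in>I. (cmod (\<Sum>j\<in>J. U i j * x j))\<^sup>2) = (\<Sum>i\<in>I. (cmod (\<Sum>j\<in>J. U i j * y j))\<^sup>2) / n"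
    unfolding x_def
    by (simp add: sum_divide_distrib[symmetric] norm_divide power_divide n0 less_imp_le mult.assoc)
  have "sqrt ((\<Sum>i\<in>I. (cmod (\<Sum>j\<in>J. U i j * y j))\<^sup>2) / n) \<le> submat_norm U I J"
    using submat_upper[OF U I J(1) x1] unfolding e .
  moreover have L0: "0 \<le> (\<Sum>i\<in>I. (cmod (\<Sum>j\<in>J. U i j * y j))\<^sup>2) / n"
    using n0 by (simp add: sum_nonneg)
  ultimately have "(sqrt ((\<Sum>i\<in>I. (cmod (\<Sum>j\<in>J. U i j * y j))\<^sup>2) / n))\<^sup>2 \<le> (submat_norm U I J)\<^sup>2"
    by (intro power_mono) simp_all
  hence "(\<Sum>i\<in>I. (cmod (\<Sum>j\<in>J. U i j * y j))\<^sup>2) / n \<le> (submat_norm U I J)\<^sup>2"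
    using L0 by simp
  thus ?thesis using n0 unfolding n_def by (simp only: pos_divide_le_eq)
qed



definition SV where
  "SV d U k = {submat_norm U I J | I J.
      I \<subseteq> {..<d} \<and> J \<subseteq> {..<d} \<and> I \<noteq> {} \<and> J \<noteq> {} \<and> card I + card J = k + 1}"

lemma s_val_SV: "s_val d U k = Max (SV d U k)"
  unfolding s_val_def SV_def ..

lemma SV_finite: "finite (SV d U k)"
proof -
  have "SV d U k \<subseteq> (\<lambda>(I,J). submat_norm U I J) ` (Pow {..<d} \<times> Pow {..<d})"
    unfolding SV_def by auto
  thus ?thesis by (rule finite_subset) simp
qed

lemma s_val_ge:
  assumes "I \<subseteq> {..<d}" "J \<subseteq> {..<d}" "I \<noteq> {}" "J \<noteq> {}" "card I + card J = k + 1"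
  shows "submat_norm U I J \<le> s_val d U k"
  unfolding s_val_SV
  by (rule Max_ge[OF SV_finite]) (use assms in \<open>unfold SV_def, blast\<close>)

lemma s_val_nonneg:
  assumes U: "unitary_mat d U" and k: "1 \<le> k" "k \<le> d"
  shows "0 \<le> s_val d U k"
proof -
  have "0 \<le> submat_norm U {..<k} {0}"
    by (rule submat_ge0[OF U]) (use k in auto)
  also have "\<dots> \<le> s_val d U k"
    by (rule s_val_ge) (use k in \<open>auto simp: lessThan_empty_iff\<close>)
  finally show ?thesis .
qed

lemma s_val_d:
  assumes U: "unitary_mat d U" and d: "1 \<le> d"
  shows "s_val d U d = 1"
proof (rule antisym)
  have ne: "SV d U d \<noteq> {}"
  proof -
    have "{..<d} \<noteq> {}" "{0} \<subseteq> {..<d}" "card {..<d} + card {0::nat} = d + 1" using d by (auto simp: lessThan_empty_iff)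
    hence "submat_norm U {..<d} {0} \<in> SV d U d" unfolding SV_def by blast
    thus ?thesis by blast
  qed
  show "s_val d U d \<le> 1" unfolding s_val_SV
    by (rule Max.boundedI[OF SV_finite ne]) (auto simp: SV_def intro: submat_le1[OF U])
  define x0 where "x0 = (\<lambda>j::nat. if j = 0 then 1 else 0 :: complex)"
  have x0: "nrm {0} x0 = 1" by (simp add: nrm_def x0_def)
  have "(\<Sum>i\<in>{..<d}. (cmod (\<Sum>j\<in>{0}. U i j * x0 j))\<^sup>2) = (\<Sum>i<d. (cmod (U i 0))\<^sup>2)"
    by (simp add: x0_def)
  also have "of_real \<dots> = (\<Sum>k<d. cnj (U k 0) * U k 0)"
    unfolding of_real_sum by (intro sum.cong refl) (simp add: cnorm_sq)
  also have "\<dots> = 1" using U d unfolding unitary_mat_def by simp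
  finally have "(\<Sum>i\<in>{..<d}. (cmod (\<Sum>j\<in>{0}. U i j * x0 j))\<^sup>2) = 1"
    by (simp only: of_real_eq_1_iff)
  hence "1 \<le> submat_norm U {..<d} {0}"
    using submat_upper[OF U _ _ x0, of "{..<d}"] d by simp
  also have "\<dots> \<le> s_val d U d" by (rule s_val_ge) (use d in \<open>auto simp: lessThan_empty_iff\<close>)
  finally show "1 \<le> s_val d U d" .
qed



lemma sorted_desc_top:
  fixes zs :: "real list"
  assumes srt: "\<And>i j. i \<le> j \<Longrightarrow> j < length zs \<Longrightarrow> zs ! j \<le> zs ! i"
    and T: "T \<subseteq> {..<length zs}" and cT: "card T = m"
  shows "(\<Sum>k\<in>T. zs ! k) \<le> (\<Sum>k<m. zs ! k)"
proof -
  have fT: "finite T" using T finite_subset by blast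
  define A where "A = T - {..<m}"
  define B where "B = {..<m} - T"
  define C where "C = T \<inter> {..<m}"
  have sT: "(\<Sum>k\<in>T. zs ! k) = (\<Sum>k\<in>C. zs ! k) + (\<Sum>k\<in>A. zs ! k)"
  proof -
    have "T = C \<union> A" "C \<inter> A = {}" by (auto simp: A_def C_def)
    thus ?thesis using fT by (simp add: sum.union_disjoint)
  qed
  have sM: "(\<Sum>k<m. zs ! k) = (\<Sum>k\<in>C. zs ! k) + (\<Sum>k\<in>B. zs ! k)"
  proof -
    have "{..<m} = C \<union> B" "C \<inter> B = {}" by (auto simp: B_def C_def)
    thus ?thesis by (metis finite_Un finite_lessThan sum.union_disjoint)
  qed
  have fA: "finite A" "finite B" "finite C" using fT by (auto simp: A_def B_def C_def)
  have cA: "card A = card B"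
  proof -
    have "card T = card C + card A"
      using fA by (metis sT card_Un_disjoint Diff_disjoint Int_Diff_Un Int_commute A_def C_def
          Diff_Int_distrib2 inf_sup_absorb)
    moreover have "m = card C + card B"
    proof -
      have "{..<m} = C \<union> B" "C \<inter> B = {}" by (auto simp: B_def C_def)
      thus ?thesis using fA by (metis card_Un_disjoint card_lessThan)
    qed
    ultimately show ?thesis using cT by simp
  qed
  have "(\<Sum>k\<in>A. zs ! k) \<le> (\<Sum>k\<in>B. zs ! k)"
  proof (cases "A = {}")
    case True
    hence "B = {}" using cA fA by simp
    thus ?thesis using True by simp
  next
    case False
    then obtain a where a: "a \<in> A" by blast
    hence am: "m < length zs" using T by (auto simp: A_def)
    define c where "c = zs ! m"
    have "(\<Sum>k\<in>A. zs ! k) \<le> (\<Sum>k\<in>A. c)"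
      by (rule sum_mono) (use T srt in \<open>auto simp: A_def c_def\<close>)
    also have "\<dots> = (\<Sum>k\<in>B. c)" using cA by simp
    also have "\<dots> \<le> (\<Sum>k\<in>B. zs ! k)"
      by (rule sum_mono) (use am srt in \<open>auto simp: B_def c_def\<close>)
    finally show ?thesis .
  qed
  thus ?thesis unfolding sT sM by simp
qed

lemma sort_desc_nth:
  fixes ys :: "real list"
  assumes "i \<le> j" "j < length (rev (sort ys))"
  shows "rev (sort ys) ! j \<le> rev (sort ys) ! i"
proof -
  have s: "sorted (sort ys)" by simp
  have "sort ys ! (length ys - Suc j) \<le> sort ys ! (length ys - Suc i)"
    by (rule sorted_nth_mono[OF s]) (use assms in auto)
  thus ?thesis using assms by (simp add: rev_nth)
qed

lemma sum_list_take_nth: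
  "sum_list (take n xs) = (\<Sum>k<min n (length xs). xs ! k)"
  by (simp add: sum_list_sum_nth atLeast0LessThan min.commute)

lemma top_sum_perm:
  fixes ys :: "real list"
  obtains p where "p permutes {..<length ys}" "\<And>k. k < length ys \<Longrightarrow> rev (sort ys) ! k = ys ! p k"
proof -
  have "mset (rev (sort ys)) = mset ys" by simp
  then obtain p where p: "p permutes {..<length ys}" "permute_list p ys = rev (sort ys)"
    by (rule mset_eq_permutation)
  have "rev (sort ys) ! k = ys ! p k" if "k < length ys" for k
    using p(2) that unfolding permute_list_def by (metis length_map length_upt minus_nat.diff_0 nth_map_upt add_0)
  thus ?thesis using p(1) that by blast
qed

lemma top_sum_ge_take:
  fixes ys :: "real list"
  shows "sum_list (take n ys) \<le> top_sum ys n"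
proof -
  obtain p where p: "p permutes {..<length ys}" "\<And>k. k < length ys \<Longrightarrow> rev (sort ys) ! k = ys ! p k"
    by (rule top_sum_perm[of ys]) blast
  define q where "q = inv_into UNIV p"
  have q: "q permutes {..<length ys}" unfolding q_def using p(1) by (rule permutes_inv)
  have pq: "p (q i) = i" for i unfolding q_def using p(1) by (simp add: permutes_inverses(1))
  define m where "m = min n (length ys)"
  have "sum_list (take n ys) = (\<Sum>i<m. ys ! i)" by (simp add: sum_list_take_nth m_def)
  also have "\<dots> = (\<Sum>i<m. rev (sort ys) ! q i)"
  proof (rule sum.cong[OF refl])
    fix i assume "i \<in> {..<m}"
    hence "i < length ys" by (simp add: m_def)
    hence "q i < length ys" using permutes_in_image[OF q, of i] by simp
    thus "ys ! i = rev (sort ys) ! q i" using p(2) pq by simp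
  qed
  also have "\<dots> = (\<Sum>k\<in>q ` {..<m}. rev (sort ys) ! k)"
    using inj_on_subset[OF permutes_inj[OF q] subset_UNIV, of "{..<m}"] by (simp add: sum.reindex)
  also have "\<dots> \<le> (\<Sum>k<m. rev (sort ys) ! k)"
  proof (rule sorted_desc_top)
    show "rev (sort ys) ! j \<le> rev (sort ys) ! i" if "i \<le> j" "j < length (rev (sort ys))" for i j
      using sort_desc_nth that .
    have "q ` {..<m} \<subseteq> q ` {..<length ys}" by (rule image_mono) (simp add: m_def)
    thus "q ` {..<m} \<subseteq> {..<length (rev (sort ys))}" using permutes_image[OF q] by simp
    show "card (q ` {..<m}) = m"
      using inj_on_subset[OF permutes_inj[OF q] subset_UNIV, of "{..<m}"] by (simp add: card_image)
  qed
  also have "\<dots> = top_sum ys n" by (simp add: top_sum_def sum_list_take_nth m_def)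
  finally show ?thesis .
qed

lemma top_sum_achieved:
  fixes xs :: "real list"
  shows "\<exists>S \<subseteq> {..<length xs}. card S = min n (length xs) \<and> top_sum xs n = (\<Sum>i\<in>S. xs ! i)"
proof -
  obtain p where p: "p permutes {..<length xs}" "\<And>k. k < length xs \<Longrightarrow> rev (sort xs) ! k = xs ! p k"
    by (rule top_sum_perm[of xs]) blast
  define m where "m = min n (length xs)"
  have "top_sum xs n = (\<Sum>k<m. rev (sort xs) ! k)" by (simp add: top_sum_def sum_list_take_nth m_def)
  also have "\<dots> = (\<Sum>k<m. xs ! p k)" by (rule sum.cong) (auto simp: m_def p(2))
  also have "\<dots> = (\<Sum>i\<in>p ` {..<m}. xs ! i)"
    using inj_on_subset[OF permutes_inj[OF p(1)] subset_UNIV, of "{..<m}"] by (simp add: sum.reindex)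
  finally have e: "top_sum xs n = (\<Sum>i\<in>p ` {..<m}. xs ! i)" .
  show ?thesis
  proof (intro exI conjI)
    have "p ` {..<m} \<subseteq> p ` {..<length xs}" by (rule image_mono) (simp add: m_def)
    thus "p ` {..<m} \<subseteq> {..<length xs}" using permutes_image[OF p(1)] by simp
    show "card (p ` {..<m}) = min n (length xs)"
      using inj_on_subset[OF permutes_inj[OF p(1)] subset_UNIV, of "{..<m}"] by (simp add: card_image m_def)
  qed (rule e)
qed



lemma expansion:
  assumes oa: "orthonormal_basis d a" and l: "l < d"
  shows "x l = (\<Sum>i<d. cinner d (a i) x * a i l)"
proof -
  have "(\<Sum>i<d. cinner d (a i) x * a i l) = (\<Sum>i<d. \<Sum>k<d. x k * (cnj (a i k) * a i l))"
    by (simp add: cinner_def sum_distrib_right sum_distrib_left mult_ac)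
  also have "\<dots> = (\<Sum>k<d. \<Sum>i<d. x k * (cnj (a i k) * a i l))" by (rule sum.swap)
  also have "\<dots> = (\<Sum>k<d. x k * (if k = l then 1 else 0))"
    by (intro sum.cong refl) (simp add: sum_distrib_left[symmetric] onb_complete[OF oa _ l])
  also have "\<dots> = x l" using l by (simp add: if_distrib[of "\<lambda>z. _ * z"] cong: if_cong)
  finally show ?thesis by simp
qed

lemma parseval:
  assumes oa: "orthonormal_basis d a"
  shows "nrm {..<d} (\<lambda>i. cinner d (a i) x) = nrm {..<d} x"
proof -
  have "of_real (nrm {..<d} x) = cinner d x x" by (rule cinner_self[symmetric])
  also have "\<dots> = cinner d (\<lambda>k. \<Sum>i<d. cinner d (a i) x * a i k) (\<lambda>k. \<Sum>i<d. cinner d (a i) x * a i k)"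
    by (rule cinner_cong) (simp_all add: expansion[OF oa, symmetric])
  also have "\<dots> = of_real (nrm {..<d} (\<lambda>i. cinner d (a i) x))"
    unfolding cinner_sums by (rule onb_sum_norm[OF oa]) simp
  finally show ?thesis by (simp only: of_real_eq_iff)
qed

lemma telescope:
  fixes f :: "nat \<Rightarrow> real"
  shows "1 \<le> n \<Longrightarrow> (\<Sum>k\<in>{2..<n+1}. f k - f (k - 1)) = f n - f 1"
proof (induction n)
  case 0 thus ?case by simp
next
  case (Suc n)
  show ?case
  proof (cases "n = 0")
    case True thus ?thesis by simp
  next
    case False
    have "{2..<Suc n + 1} = insert (n+1) {2..<n+1}" using False by auto
    hence "(\<Sum>k\<in>{2..<Suc n + 1}. f k - f (k - 1)) = (f (n+1) - f n) + (\<Sum>k\<in>{2..<n+1}. f k - f (k - 1))"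
      by simp
    also have "\<dots> = f (Suc n) - f 1" using Suc.IH False by simp
    finally show ?thesis .
  qed
qed

theorem lemma1:
  fixes d :: nat and a b :: "nat \<Rightarrow> nat \<Rightarrow> complex"
    and U \<rho> :: "nat \<Rightarrow> nat \<Rightarrow> complex" and p q :: "nat \<Rightarrow> real"
  assumes "orthonormal_basis d a" and "orthonormal_basis d b"
    and "unitary_mat d U"
    and "\<forall>i<d. \<forall>j<d. U i j = cinner d (a i) (b j)"
    and "density_matrix d \<rho>"
    and "\<forall>i<d. p i = Re (cinner d (a i) (mat_vec d \<rho> (a i)))"
    and "\<forall>j<d. q j = Re (cinner d (b j) (mat_vec d \<rho> (b j)))"
  shows "map p [0..<d] @ map q [0..<d] \<prec>
           [1, s_val d U 1] @ map (\<lambda>k. s_val d U k - s_val d U (k - 1)) [2..<d+1]"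
proof -
  note oa = assms(1) and ob = assms(2) and U = assms(3) and UU = assms(4) and dm = assms(5)
    and pp = assms(6) and qq = assms(7)
  have tr1: "(\<Sum>i<d. \<rho> i i) = 1" using dm by (simp add: density_matrix_def)
  have d1: "1 \<le> d"
  proof (rule ccontr)
    assume "\<not> 1 \<le> d" hence "d = 0" by simp
    thus False using tr1 by simp
  qed
  have "psd d \<rho>" using dm unfolding density_matrix_def psd_def qf_def by blast
  then obtain c where c: "\<forall>k<d. \<forall>l<d. \<rho> k l = (\<Sum>r<d. c r k * cnj (c r l))"
    using chol by blast
  have trc: "(\<Sum>r<d. nrm {..<d} (c r)) = 1"
    using trace_chol[OF c] tr1 by (metis of_real_eq_1_iff)
  have pv: "p i = (\<Sum>r<d. (cmod (cinner d (a i) (c r)))\<^sup>2)" if "i < d" for i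
    using pp that mixed_form[OF c, of "a i"] by simp
  have qv: "q j = (\<Sum>r<d. (cmod (cinner d (b j) (c r)))\<^sup>2)" if "j < d" for j
    using qq that mixed_form[OF c, of "b j"] by simp
  have p0: "p i \<ge> 0" if "i < d" for i using pv[OF that] by (simp add: sum_nonneg)
  have q0: "q j \<ge> 0" if "j < d" for j using qv[OF that] by (simp add: sum_nonneg)
  have sumP: "(\<Sum>i\<in>I. p i) = (\<Sum>r<d. nrm I (\<lambda>i. cinner d (a i) (c r)))" if "I \<subseteq> {..<d}" for I
  proof -
    have "(\<Sum>i\<in>I. p i) = (\<Sum>i\<in>I. \<Sum>r<d. (cmod (cinner d (a i) (c r)))\<^sup>2)"
      using that by (intro sum.cong refl) (auto simp: pv)
    also have "\<dots> = (\<Sum>r<d. nrm I (\<lambda>i. cinner d (a i) (c r)))"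
      unfolding nrm_def by (rule sum.swap)
    finally show ?thesis .
  qed
  have sumQ: "(\<Sum>j\<in>J. q j) = (\<Sum>r<d. nrm J (\<lambda>j. cinner d (b j) (c r)))" if "J \<subseteq> {..<d}" for J
  proof -
    have "(\<Sum>j\<in>J. q j) = (\<Sum>j\<in>J. \<Sum>r<d. (cmod (cinner d (b j) (c r)))\<^sup>2)"
      using that by (intro sum.cong refl) (auto simp: qv)
    also have "\<dots> = (\<Sum>r<d. nrm J (\<lambda>j. cinner d (b j) (c r)))"
      unfolding nrm_def by (rule sum.swap)
    finally show ?thesis .
  qed
  have totP: "(\<Sum>i<d. p i) = 1"
    using sumP[of "{..<d}"] parseval[OF oa] trc by simp
  have totQ: "(\<Sum>j<d. q j) = 1"
    using sumQ[of "{..<d}"] parseval[OF ob] trc by simp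
  have subP: "(\<Sum>i\<in>I. p i) \<le> 1" if "I \<subseteq> {..<d}" for I
  proof -
    have "(\<Sum>i\<in>I. p i) \<le> (\<Sum>i<d. p i)" by (rule sum_mono2) (use that p0 in auto)
    thus ?thesis using totP by simp
  qed
  have subQ: "(\<Sum>j\<in>J. q j) \<le> 1" if "J \<subseteq> {..<d}" for J
  proof -
    have "(\<Sum>j\<in>J. q j) \<le> (\<Sum>j<d. q j)" by (rule sum_mono2) (use that q0 in auto)
    thus ?thesis using totQ by simp
  qed
  have key: "(\<Sum>i\<in>I. p i) + (\<Sum>j\<in>J. q j) \<le> 1 + submat_norm U I J"
    if I: "I \<subseteq> {..<d}" and J: "J \<subseteq> {..<d}" "J \<noteq> {}" for I J
  proof -
    define s where "s = submat_norm U I J"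
    have s0: "s \<ge> 0" unfolding s_def by (rule submat_ge0[OF U I J])
    have "(\<Sum>i\<in>I. p i) + (\<Sum>j\<in>J. q j)
        = (\<Sum>r<d. nrm I (\<lambda>i. cinner d (a i) (c r)) + nrm J (\<lambda>j. cinner d (b j) (c r)))"
      unfolding sumP[OF I] sumQ[OF J(1)] by (simp add: sum.distrib)
    also have "\<dots> \<le> (\<Sum>r<d. (1 + s) * nrm {..<d} (c r))"
    proof (rule sum_mono)
      fix r
      show "nrm I (\<lambda>i. cinner d (a i) (c r)) + nrm J (\<lambda>j. cinner d (b j) (c r)) \<le> (1 + s) * nrm {..<d} (c r)"
        by (rule key_pure[OF oa ob UU I J(1) s0]) (unfold s_def, rule submat_bound[OF U I J])
    qed
    also have "\<dots> = 1 + s" using trc by (simp add: sum_distrib_left[symmetric])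
    finally show ?thesis unfolding s_def .
  qed
  define sv where "sv = s_val d U"
  define L where "L = map p [0..<d] @ map q [0..<d]"
  define R where "R = [1, sv 1] @ map (\<lambda>k. sv k - sv (k - 1)) [2..<d+1]"
  have lenL: "length L = 2 * d" by (simp add: L_def)
  have lenR: "length R = d + 1" using d1 by (simp add: R_def; arith)
  have Lp: "L ! i = p i" if "i < d" for i using that by (simp add: L_def nth_append)
  have Lq: "L ! i = q (i - d)" if "d \<le> i" "i < 2 * d" for i using that by (simp add: L_def nth_append)
  have L0: "L ! i \<ge> 0" if "i < 2 * d" for i
  proof (cases "i < d")
    case True thus ?thesis using Lp p0 by simp
  next
    case False thus ?thesis using Lq[of i] q0[of "i - d"] that by simp
  qed
  have sumL: "sum_list L = 2"
    unfolding L_def using totP totQ by (simp add: interv_sum_list_conv_sum_set_nat atLeast0LessThan)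
  have sv0: "sv k \<ge> 0" if "1 \<le> k" "k \<le> d" for k
    unfolding sv_def by (rule s_val_nonneg[OF U that])
  have svd: "sv d = 1" unfolding sv_def by (rule s_val_d[OF U d1])
  have sumR: "sum_list R = 2"
  proof -
    have "sum_list R = 1 + sv 1 + (\<Sum>k\<in>{2..<d+1}. sv k - sv (k - 1))"
      by (simp add: R_def interv_sum_list_conv_sum_set_nat)
    also have "\<dots> = 1 + sv d" using telescope[OF d1, of sv] by simp
    finally show ?thesis using svd by simp
  qed
  have prefR: "sum_list (take (j + 2) R) = 1 + sv (j + 1)" if "j + 1 \<le> d" for j
    using that
  proof (induction j)
    case 0 thus ?case by (simp add: R_def)
  next
    case (Suc j)
    have lt: "j + 2 < length R" using Suc.prems lenR by simp
    have jl: "j < length [2..<d+1]" using Suc.prems by simp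
    have "R ! (j + 2) = map (\<lambda>k. sv k - sv (k - 1)) [2..<d+1] ! j"
      unfolding R_def by (simp add: numeral_2_eq_2 del: upt_Suc)
    also have "\<dots> = sv (2 + j) - sv (2 + j - 1)"
      using jl by (simp del: upt_Suc)
    finally have Rn: "R ! (j + 2) = sv (j + 2) - sv (j + 1)" by (simp add: add.commute)
    have "take (Suc j + 2) R = take (j + 2) R @ [R ! (j + 2)]"
      using take_Suc_conv_app_nth[OF lt] by simp
    hence "sum_list (take (Suc j + 2) R) = sum_list (take (j + 2) R) + R ! (j + 2)" by simp
    also have "\<dots> = 1 + sv (Suc j + 1)" using Suc.IH Suc.prems Rn by simp
    finally show ?case .
  qed
  have padL: "pad (max (length L) (length R)) L = L" using lenL lenR d1 by (simp add: pad_def)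
  define R' where "R' = pad (max (length L) (length R)) R"
  have R'_def2: "R' = R @ replicate (2 * d - (d + 1)) 0" using lenL lenR d1 by (simp add: R'_def pad_def)
  have tops: "top_sum L n \<le> top_sum R' n" for n
  proof -
    obtain S where S: "S \<subseteq> {..<length L}" "card S = min n (length L)" "top_sum L n = (\<Sum>i\<in>S. L ! i)"
      using top_sum_achieved by blast
    have fS: "finite S" by (rule finite_subset[OF S(1)]) simp
    have "(\<Sum>i\<in>S. L ! i) \<le> sum_list (take n R')"
    proof (cases "n = 0")
      case True
      hence "S = {}" using S(2) fS by simp
      thus ?thesis using True by simp
    next
      case n0: False
      show ?thesis
      proof (cases "d + 1 \<le> n")
        case True
        have "take n R' = R @ take (n - (d + 1)) (replicate (2 * d - (d + 1)) 0)"
          unfolding R'_def2 take_append using True lenR by simp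
        hence "sum_list (take n R') = 2" using sumR by (simp add: sum_list_replicate)
        moreover have "(\<Sum>i\<in>S. L ! i) \<le> (\<Sum>i<2 * d. L ! i)"
          by (rule sum_mono2) (use S(1) lenL L0 in auto)
        moreover have "(\<Sum>i<2 * d. L ! i) = 2"
          using sumL lenL by (simp add: sum_list_sum_nth atLeast0LessThan)
        ultimately show ?thesis by simp
      next
        case False
        hence nd: "n \<le> d" by simp
        have cS: "card S = n" using S(2) nd lenL by simp
        have tR: "take n R' = take n R" unfolding R'_def2 using nd lenR by simp
        define I where "I = S \<inter> {..<d}"
        define S2 where "S2 = S - {..<d}"
        define J where "J = (\<lambda>i. i - d) ` S2"
        have I: "I \<subseteq> {..<d}" by (auto simp: I_def)
        have S2: "\<forall>i\<in>S2. d \<le> i \<and> i < 2 * d" using S(1) lenL by (auto simp: S2_def)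
        have J: "J \<subseteq> {..<d}" using S2 by (auto simp: J_def)
        have inj: "inj_on (\<lambda>i. i - d) S2"
          using S2 by (intro inj_onI) (metis le_add_diff_inverse)
        have sS: "(\<Sum>i\<in>S. L ! i) = (\<Sum>i\<in>I. p i) + (\<Sum>j\<in>J. q j)"
        proof -
          have "S = I \<union> S2" "I \<inter> S2 = {}" by (auto simp: I_def S2_def)
          hence "(\<Sum>i\<in>S. L ! i) = (\<Sum>i\<in>I. L ! i) + (\<Sum>i\<in>S2. L ! i)"
            using fS by (metis finite_Un sum.union_disjoint)
          moreover have "(\<Sum>i\<in>I. L ! i) = (\<Sum>i\<in>I. p i)" by (intro sum.cong refl) (auto simp: I_def Lp)
          moreover have "(\<Sum>i\<in>S2. L ! i) = (\<Sum>i\<in>S2. q (i - d))"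
            using S2 by (intro sum.cong refl) (simp add: Lq)
          moreover have "(\<Sum>j\<in>J. q j) = (\<Sum>i\<in>S2. q (i - d))"
            unfolding J_def by (simp add: sum.reindex[OF inj])
          ultimately show ?thesis by simp
        qed
        have cIJ: "card I + card J = n"
        proof -
          have "S = I \<union> S2" "I \<inter> S2 = {}" by (auto simp: I_def S2_def)
          hence "card S = card I + card S2" using fS by (metis card_Un_disjoint finite_Un)
          moreover have "card J = card S2" unfolding J_def by (rule card_image[OF inj])
          ultimately show ?thesis using cS by simp
        qed
        have pre1: "1 \<le> sum_list (take n R')"
        proof (cases "n = 1")
          case True thus ?thesis unfolding tR by (simp add: R_def)
        next
          case False
          hence n2: "2 \<le> n" using n0 by simp
          have "n - 2 + 1 \<le> d" using nd n2 by simp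
          from prefR[OF this] have "sum_list (take (n - 2 + 2) R) = 1 + sv (n - 2 + 1)" .
          moreover have "n - 2 + 2 = n" "n - 2 + 1 = n - 1" using n2 by simp_all
          ultimately have "sum_list (take n R') = 1 + sv (n - 1)" unfolding tR by simp
          moreover have "sv (n - 1) \<ge> 0" using sv0[of "n - 1"] False n0 nd by simp
          ultimately show ?thesis by simp
        qed
        show ?thesis
        proof (cases "I = {} \<or> J = {}")
          case True
          hence "(\<Sum>i\<in>S. L ! i) \<le> 1" unfolding sS
            by (elim disjE) (simp_all add: subP[OF I] subQ[OF J])
          thus ?thesis using pre1 by simp
        next
          case False
          hence ne: "I \<noteq> {}" "J \<noteq> {}" by auto
          have fIJ: "finite I" "finite J" using finite_subset[OF I] finite_subset[OF J] by simp_all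
          have "card I \<noteq> 0" "card J \<noteq> 0" using ne fIJ by simp_all
          hence n2: "2 \<le> n" using cIJ by linarith
          have "(\<Sum>i\<in>S. L ! i) \<le> 1 + submat_norm U I J" unfolding sS by (rule key[OF I J ne(2)])
          also have "submat_norm U I J \<le> sv (n - 1)" unfolding sv_def
            by (rule s_val_ge[OF I J ne]) (use cIJ n2 in simp)
          also have "1 + sv (n - 1) = sum_list (take n R')"
          proof -
            have "n - 2 + 1 \<le> d" using nd n2 by simp
            from prefR[OF this] have "sum_list (take (n - 2 + 2) R) = 1 + sv (n - 2 + 1)" .
            moreover have "n - 2 + 2 = n" "n - 2 + 1 = n - 1" using n2 by simp_all
            ultimately show ?thesis unfolding tR by simp
          qed
          finally show ?thesis by simp
        qed
      qed
    qed
    also have "\<dots> \<le> top_sum R' n" by (rule top_sum_ge_take)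
    finally show ?thesis using S(3) by simp
  qed
  show ?thesis
    unfolding majorized_def Let_def L_def[symmetric] sv_def[symmetric] R_def[symmetric]
    using tops padL sumL sumR unfolding R'_def by simp
qed

end
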